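(* Let $(\Omega,\mathcal F,(\mathcal F_n)_{n\ge 0},\mathbb P)$ be a filtered probability space. Let $f,g:\{0,1,2,\ldots\}\to\mathbb R$ be non-decreasing functions with $-f(0)<g(0)$. (a) Let $(M_n)_{n\ge0}$ be a supermartingale with $M_n\ge -f(n)$ for all $n\ge 0$ and with $\mathbb E[M_0]\in[-f(0),g(0)]$. Then \[ \mathbb P\{\exists n\ge 0: M_n\ge g(n)\}\;\le\;1-\frac{g(0)-\mathbb E[M_0]}{g(0)+f(0)}\prod_{n=1}^\infty\frac{g(n)+f(n-1)}{g(n)+f(n)}. \] (b) For every $m\in[-f(0),g(0)]$ there exist a filtered probability space and a martingale $(M_n)_{n\ge0}$ on it with $M_n\ge -f(n)$ for all $n\ge 0$ and $\mathbb E[M_0]=m$ for which the inequality in (a) holds with equality.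
   Context: An adapted process $(M_n)_{n\ge0}$ is a supermartingale if $\mathbb E[|M_n|]<\infty$ and $\mathbb E[M_{n+1}\mid\mathcal F_n]\le M_n$ for all $n\ge 0$. *)

theory Defs
  imports "HOL-Probability.Probability"
begin

definition filtration_on :: "'a measure \<Rightarrow> (nat \<Rightarrow> 'a measure) \<Rightarrow> bool" where
  "filtration_on M F \<longleftrightarrow>
     (\<forall>n. subalgebra M (F n)) \<and> (\<forall>n m. n \<le> m \<longrightarrow> sets (F n) \<subseteq> sets (F m))"

definition supermartingale :: "'a measure \<Rightarrow> (nat \<Rightarrow> 'a measure) \<Rightarrow> (nat \<Rightarrow> 'a \<Rightarrow> real) \<Rightarrow> bool" where
  "supermartingale M F X \<longleftrightarrow>
     (\<forall>n. X n \<in> borel_measurable (F n)) \<and> (\<forall>n. integrable M (X n)) \<and>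
     (\<forall>n. AE x in M. real_cond_exp M (F n) (X (Suc n)) x \<le> X n x)"

definition martingale :: "'a measure \<Rightarrow> (nat \<Rightarrow> 'a measure) \<Rightarrow> (nat \<Rightarrow> 'a \<Rightarrow> real) \<Rightarrow> bool" where
  "martingale M F X \<longleftrightarrow>
     (\<forall>n. X n \<in> borel_measurable (F n)) \<and> (\<forall>n. integrable M (X n)) \<and>
     (\<forall>n. AE x in M. real_cond_exp M (F n) (X (Suc n)) x = X n x)"

text \<open>The infinite product \<Prod>_{n>=1} (g n + f (n-1)) / (g n + f n), as the limit of
  its partial products (the factors lie in (0,1], so the partial products decrease
  to a limit in [0,1], possibly 0).\<close>
definition ratio_prod :: "(nat \<Rightarrow> real) \<Rightarrow> (nat \<Rightarrow> real) \<Rightarrow> real" where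
  "ratio_prod f g = lim (\<lambda>N. \<Prod>n\<in>{1..N}. (g n + f (n - 1)) / (g n + f n))"

definition crossing_bound :: "(nat \<Rightarrow> real) \<Rightarrow> (nat \<Rightarrow> real) \<Rightarrow> real \<Rightarrow> real" where
  "crossing_bound f g e = 1 - (g 0 - e) / (g 0 + f 0) * ratio_prod f g"

end

theory Submission
  imports Defs
begin

context
  fixes f g :: "nat \<Rightarrow> real"
  assumes mf: "mono f" and mg: "mono g" and fg0: "- f 0 < g 0"
begin

definition "ss n = g n + f n"
definition "rr k = (g k + f (k - 1)) / ss k"
definition "PP N = (\<Prod>k\<in>{1..N}. rr k)"

lemma ss_pos: "ss n > 0"
proof -
  have "f 0 \<le> f n" "g 0 \<le> g n" using mf mg by (auto simp: mono_def)
  then show ?thesis using fg0 by (simp add: ss_def)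
qed

lemma rr_pos: "rr k > 0"
proof -
  have "f 0 \<le> f (k-1)" "g 0 \<le> g k" using mf mg by (auto simp: mono_def)
  then show ?thesis using fg0 ss_pos[of k] by (simp add: rr_def)
qed

lemma rr_le1: "rr k \<le> 1"
proof -
  have "f (k-1) \<le> f k" using mf by (auto simp: mono_def)
  then show ?thesis using ss_pos[of k] by (simp add: rr_def ss_def)
qed

lemma PP_pos: "PP N > 0"
  unfolding PP_def by (rule prod_pos) (use rr_pos in auto)

lemma PP_Suc: "PP (Suc N) = PP N * rr (Suc N)"
  unfolding PP_def by (simp add: prod.nat_ivl_Suc')

lemma PP_0: "PP 0 = 1" unfolding PP_def by simp

lemma PP_dec: "decseq PP"
proof (rule decseq_SucI)
  fix n show "PP (Suc n) \<le> PP n" using PP_Suc[of n] PP_pos[of n] rr_le1[of "Suc n"]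
    by (simp add: mult_left_le)
qed

lemma PP_lim: "PP \<longlonglongrightarrow> ratio_prod f g"
proof -
  obtain L where L: "PP \<longlonglongrightarrow> L" using decseq_convergent[OF PP_dec, of 0] PP_pos
    by (meson less_imp_le)
  have "ratio_prod f g = lim PP" unfolding ratio_prod_def PP_def rr_def ss_def by simp
  then show ?thesis using L limI by metis
qed

lemma C_nonneg: "ratio_prod f g \<ge> 0"
  using PP_lim PP_pos by (meson LIMSEQ_le_const less_imp_le)

lemma C_le: "ratio_prod f g \<le> PP n"
  using decseq_ge[OF PP_dec PP_lim] .

definition "cc n = ratio_prod f g / PP n"

lemma cc_nonneg: "cc n \<ge> 0" using C_nonneg PP_pos[of n] by (simp add: cc_def)
lemma cc_le1: "cc n \<le> 1" using C_le[of n] PP_pos[of n] by (simp add: cc_def)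
lemma cc_0: "cc 0 = ratio_prod f g" by (simp add: cc_def PP_0)
lemma cc_Suc: "cc n = rr (Suc n) * cc (Suc n)"
  using PP_pos[of n] rr_pos[of "Suc n"] by (simp add: cc_def PP_Suc)

definition "LL n x = 1 - (g n - x) * (cc n / ss n)"

lemma LL_nonneg: "x \<ge> - f n \<Longrightarrow> LL n x \<ge> 0"
proof -
  assume x: "x \<ge> - f n"
  have "(g n - x) / ss n \<le> 1" using x ss_pos[of n] by (simp add: ss_def)
  then have "(g n - x) / ss n * cc n \<le> 1"
    using cc_nonneg[of n] cc_le1[of n]
    by (metis mult_le_one mult_nonpos_nonneg nle_le order_trans zero_le_one le_cases)
  then show ?thesis by (simp add: LL_def)
qed

lemma LL_ge1: "x \<ge> g n \<Longrightarrow> LL n x \<ge> 1"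
proof -
  assume "x \<ge> g n"
  then have "(g n - x) * (cc n / ss n) \<le> 0"
    using cc_nonneg[of n] ss_pos[of n] by (intro mult_nonpos_nonneg) auto
  then show ?thesis unfolding LL_def by simp
qed

lemma LL_mono: "x \<ge> - f n \<Longrightarrow> LL (Suc n) x \<le> LL n x"
proof -
  assume x: "x \<ge> - f n"
  have gm: "g n \<le> g (Suc n)" using mg by (auto simp: mono_def)
  have key: "(g n - x) * (g (Suc n) + f n) \<le> (g (Suc n) - x) * ss n"
  proof -
    have "0 \<le> (g (Suc n) - g n) * (f n + x)" using gm x by simp
    then show ?thesis by (simp add: ss_def algebra_simps)
  qed
  have sp: "ss n > 0" "ss (Suc n) > 0" using ss_pos by auto
  have c: "cc n = (g (Suc n) + f n) / ss (Suc n) * cc (Suc n)"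
    using cc_Suc[of n] by (simp add: rr_def)
  have "(g n - x) * (cc n / ss n) = ((g n - x) * (g (Suc n) + f n)) / ss n * (cc (Suc n) / ss (Suc n))"
    unfolding c by (simp add: field_simps)
  also have "\<dots> \<le> ((g (Suc n) - x) * ss n) / ss n * (cc (Suc n) / ss (Suc n))"
    by (intro mult_right_mono divide_right_mono key) (use sp cc_nonneg in auto)
  also have "\<dots> = (g (Suc n) - x) * (cc (Suc n) / ss (Suc n))" using sp by simp
  finally show ?thesis by (simp add: LL_def)
qed


lemma part_a:
  fixes M :: "'a measure" and F :: "nat \<Rightarrow> 'a measure" and X :: "nat \<Rightarrow> 'a \<Rightarrow> real"
  assumes P: "prob_space M" and Fil: "filtration_on M F" and S: "supermartingale M F X"
    and lb: "\<forall>n. \<forall>x\<in>space M. X n x \<ge> - f n"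
  shows "measure M {x \<in> space M. \<exists>n. X n x \<ge> g n} \<le> crossing_bound f g (integral\<^sup>L M (X 0))"
proof -
  interpret prob_space M by (rule P)
  have sub: "subalgebra M (F n)" for n using Fil by (simp add: filtration_on_def)
  have spF: "space (F n) = space M" for n using sub[of n] by (simp add: subalgebra_def)
  have sfs: "sigma_finite_subalgebra M (F n)" for n
    by (rule finite_measure_subalgebra_is_sigma_finite) (simp add: finite_measure_subalgebra_def finite_measure_subalgebra_axioms_def sub finite_measure_axioms)
  have measF: "X k \<in> borel_measurable (F n)" if "k \<le> n" for k n
  proof -
    have "subalgebra (F n) (F k)" using Fil that spF unfolding subalgebra_def filtration_on_def by auto
    then show ?thesis using S measurable_from_subalg unfolding supermartingale_def by blast
  qed
  have measM: "X n \<in> borel_measurable M" for n using measF[of n n] measurable_from_subalg sub by blast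
  have intX: "integrable M (X n)" for n using S by (simp add: supermartingale_def)
  have setsF: "B \<in> sets M" if "B \<in> sets (F n)" for B n using sub[of n] that by (auto simp: subalgebra_def)
  have super: "(\<integral>x. indicator B x * X (Suc n) x \<partial>M) \<le> (\<integral>x. indicator B x * X n x \<partial>M)"
    if B: "B \<in> sets (F n)" for B n
  proof -
    interpret sigma_finite_subalgebra M "F n" by (rule sfs)
    have BM: "B \<in> sets M" using setsF B .
    have "(\<integral>x\<in>B. X (Suc n) x \<partial>M) = (\<integral>x\<in>B. real_cond_exp M (F n) (X (Suc n)) x \<partial>M)"
      by (rule real_cond_exp_intA[OF intX B])
    also have "\<dots> \<le> (\<integral>x\<in>B. X n x \<partial>M)"
      unfolding set_lebesgue_integral_def
    proof (rule integral_mono_AE)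
      show "integrable M (\<lambda>x. indicator B x *\<^sub>R real_cond_exp M (F n) (X (Suc n)) x)"
        by (rule integrable_mult_indicator[OF BM real_cond_exp_int(1)[OF intX]])
      show "integrable M (\<lambda>x. indicator B x *\<^sub>R X n x)"
        by (rule integrable_mult_indicator[OF BM intX])
      show "AE x in M. indicator B x *\<^sub>R real_cond_exp M (F n) (X (Suc n)) x \<le> indicator B x *\<^sub>R X n x"
        using S unfolding supermartingale_def
        by (auto elim!: allE[of _ n] eventually_mono simp: indicator_def)
    qed
    finally show ?thesis unfolding set_lebesgue_integral_def by simp
  qed
  define A where "A n = {x \<in> space M. \<exists>k\<le>n. g k \<le> X k x}" for n
  have AF: "A n \<in> sets (F n)" for n
  proof -
    have "A n = (\<Union>k\<in>{..n}. {x \<in> space (F n). g k \<le> X k x})" unfolding A_def spF by auto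
    also have "\<dots> \<in> sets (F n)"
    proof (intro sets.finite_UN)
      fix k assume "k \<in> {..n}"
      then have [measurable]: "X k \<in> borel_measurable (F n)" using measF by auto
      show "{x \<in> space (F n). g k \<le> X k x} \<in> sets (F n)" by measurable
    qed auto
    finally show ?thesis .
  qed
  have AM: "A n \<in> sets M" for n using setsF AF by blast
  define W where "W n x = indicator (A n) x + indicator (space M - A n) x * LL n (X n x)" for n x
  have intLL: "integrable M (\<lambda>x. LL n (X n x))" for n
    unfolding LL_def using intX[of n] by auto
  have intI: "integrable M (indicator (A n) :: 'a \<Rightarrow> real)" for n
    using AM[of n] by (simp add: emeasure_finite less_top[symmetric])
  have intW: "integrable M (W n)" for n
    unfolding W_def using intI[of n]
    using integrable_mult_indicator[OF _ intLL, of "space M - A n" n] AM[of n]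
    by (intro Bochner_Integration.integrable_add) auto
  have intLLeq: "(\<integral>x. LL n (X n x) \<partial>M) = LL n (\<integral>x. X n x \<partial>M)" for n
    unfolding LL_def using intX[of n] prob_space
    by (simp add: Bochner_Integration.integral_diff integral_mult_left_zero left_diff_distrib)
  have claim: "(\<integral>x. W n x \<partial>M) \<le> crossing_bound f g (integral\<^sup>L M (X 0))" for n
  proof (induction n)
    case 0
    have "(\<integral>x. W 0 x \<partial>M) \<le> (\<integral>x. LL 0 (X 0 x) \<partial>M)"
    proof (rule integral_mono[OF intW intLL])
      fix x assume "x \<in> space M"
      then show "W 0 x \<le> LL 0 (X 0 x)"
        using LL_ge1[of 0 "X 0 x"] by (auto simp: W_def A_def indicator_def)
    qed
    also have "\<dots> = crossing_bound f g (integral\<^sup>L M (X 0))"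
      by (subst intLLeq) (simp add: LL_def crossing_bound_def cc_0 ss_def field_simps)
    finally show ?case .
  next
    case (Suc n)
    define k1 where "k1 = cc (Suc n) / ss (Suc n)"
    define B where "B = space M - A n"
    have BF: "B \<in> sets (F n)" unfolding B_def using AF[of n] spF[of n]
      by (metis sets.compl_sets)
    have BM: "B \<in> sets M" using setsF BF by blast
    have LLlin: "LL (Suc n) y = LL (Suc n) z + k1 * (y - z)" for y z
      unfolding LL_def k1_def by (simp add: algebra_simps add_divide_distrib[symmetric])
    have int1: "integrable M (\<lambda>x. indicator B x * X m x)" for m
      using integrable_mult_indicator[OF BM intX[of m]] by simp
    have pw: "W (Suc n) x \<le> W n x + k1 * (indicator B x * X (Suc n) x - indicator B x * X n x)"
      if x: "x \<in> space M" for x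
    proof (cases "x \<in> A n")
      case True
      then have "x \<in> A (Suc n)" using le_SucI unfolding A_def by blast
      then show ?thesis using True by (simp add: W_def B_def)
    next
      case False
      have xn: "X n x \<ge> - f n" using lb x by auto
      have chain: "LL (Suc n) (X (Suc n) x) \<le> LL n (X n x) + k1 * (X (Suc n) x - X n x)"
        using LLlin[of "X (Suc n) x" "X n x"] LL_mono[OF xn] by simp
      show ?thesis
      proof (cases "x \<in> A (Suc n)")
        case True
        then have "g (Suc n) \<le> X (Suc n) x" using False unfolding A_def
          by (auto simp: le_Suc_eq)
        then have "1 \<le> LL (Suc n) (X (Suc n) x)" by (rule LL_ge1)
        then show ?thesis using True False x chain by (simp add: W_def B_def)
      next
        case F2: False
        then show ?thesis using False x chain by (simp add: W_def B_def)
      qed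
    qed
    have "(\<integral>x. W (Suc n) x \<partial>M) \<le> (\<integral>x. W n x + k1 * (indicator B x * X (Suc n) x - indicator B x * X n x) \<partial>M)"
      by (rule integral_mono) (use intW int1 pw in auto)
    also have "\<dots> = (\<integral>x. W n x \<partial>M) + k1 * ((\<integral>x. indicator B x * X (Suc n) x \<partial>M) - (\<integral>x. indicator B x * X n x \<partial>M))"
      using intW int1 by simp
    also have "\<dots> \<le> (\<integral>x. W n x \<partial>M)"
    proof -
      have "k1 \<ge> 0" unfolding k1_def using cc_nonneg ss_pos by (simp add: less_imp_le)
      moreover have "(\<integral>x. indicator B x * X (Suc n) x \<partial>M) - (\<integral>x. indicator B x * X n x \<partial>M) \<le> 0"
        using super[OF BF] by simp
      ultimately show ?thesis by (simp add: mult_nonneg_nonpos)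
    qed
    finally show ?case using Suc.IH by linarith
  qed
  have measA: "measure M (A n) \<le> crossing_bound f g (integral\<^sup>L M (X 0))" for n
  proof -
    have "measure M (A n) = (\<integral>x. indicator (A n) x \<partial>M)" using AM[of n] by simp
    also have "\<dots> \<le> (\<integral>x. W n x \<partial>M)"
    proof (rule integral_mono[OF _ intW])
      show "integrable M (indicator (A n) :: 'a \<Rightarrow> real)" by (rule intI)
      fix x assume "x \<in> space M"
      then show "indicator (A n) x \<le> W n x" using LL_nonneg[of n "X n x"] lb
        by (auto simp: W_def indicator_def)
    qed
    also have "\<dots> \<le> crossing_bound f g (integral\<^sup>L M (X 0))" by (rule claim)
    finally show ?thesis .
  qed
  have U: "{x \<in> space M. \<exists>n. X n x \<ge> g n} = (\<Union>n. A n)" unfolding A_def by auto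
  have inc: "incseq A" unfolding A_def incseq_def by (auto intro: order_trans)
  have "(\<lambda>n. measure M (A n)) \<longlonglongrightarrow> measure M (\<Union>n. A n)"
    by (rule Lim_measure_incseq) (use AM inc in auto)
  then have "measure M (\<Union>n. A n) \<le> crossing_bound f g (integral\<^sup>L M (X 0))"
    by (rule LIMSEQ_le_const2) (use measA in auto)
  then show ?thesis using U by simp
qed


lemma part_b:
  assumes mm: "m \<in> {- f 0 .. g 0}"
  shows "\<exists>(M :: nat measure) F X.
        prob_space M \<and> filtration_on M F \<and> martingale M F X \<and>
        (\<forall>n. \<forall>x\<in>space M. X n x \<ge> - f n) \<and>
        integral\<^sup>L M (X 0) = m \<and>
        measure M {x \<in> space M. \<exists>n. X n x \<ge> g n} = crossing_bound f g m"
proof -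
  define C where "C = ratio_prod f g"
  define S0 where "S0 = (g 0 - m) / ss 0"
  define S where "S n = S0 * PP n" for n
  define w where "w i = (if i = 0 then S0 * C else if i = 1 then 1 - S0 else S (i - 2) - S (i - 1))" for i
  have ss0: "ss 0 > 0" by (rule ss_pos)
  have S0ge: "S0 \<ge> 0" using mm ss0 by (simp add: S0_def)
  have S0le: "S0 \<le> 1" using mm ss0 by (simp add: S0_def ss_def)
  have S_Suc: "S (Suc n) = S n * rr (Suc n)" for n by (simp add: S_def PP_Suc)
  have wnn: "w i \<ge> 0" for i
  proof -
    have "S (Suc k) \<le> S k" for k using PP_dec S0ge unfolding S_def decseq_Suc_iff
      by (simp add: mult_left_mono)
    moreover have "S (i - 1) \<le> S (i - 2)" if "i \<ge> 2" using calculation[of "i - 2"] that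
      by (simp add: Suc_diff_Suc numeral_2_eq_2)
    ultimately show ?thesis unfolding w_def using S0ge S0le C_nonneg C_def by auto
  qed
  have Slim: "S \<longlonglongrightarrow> S0 * C" unfolding S_def C_def by (intro tendsto_mult_left PP_lim)
  have "(\<lambda>k. S k - S (Suc k)) sums (S 0 - S0 * C)" by (rule telescope_sums'[OF Slim])
  then have "(\<lambda>k. w (Suc (Suc k))) sums (S0 - S0 * C)" by (simp add: w_def S_def PP_0)
  then have "(\<lambda>k. w (Suc k)) sums (S0 - S0 * C + w (Suc 0))"
    by (rule iffD1[OF sums_Suc_iff[of "\<lambda>k. w (Suc k)"]])
  then have "w sums (S0 - S0 * C + w (Suc 0) + w 0)"
    by (rule iffD1[OF sums_Suc_iff[of w]])
  moreover have "S0 - S0 * C + w (Suc 0) + w 0 = 1" by (simp add: w_def)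
  ultimately have wsum: "w sums 1" by simp
  have nnint: "(\<integral>\<^sup>+x. ennreal (w x) \<partial>count_space UNIV) = 1"
    using wsum wnn by (simp add: nn_integral_count_space_nat suminf_ennreal2 sums_summable sums_unique[symmetric])
  define p where "p = embed_pmf w"
  have pw: "pmf p i = w i" for i unfolding p_def by (rule pmf_embed_pmf[OF wnn nnint])
  define M where "M = measure_pmf p"
  define pi where "pi n i = (if 1 \<le> i \<and> i \<le> Suc n then i else 0)" for n i :: nat
  define F where "F n = vimage_algebra UNIV (pi n) (count_space UNIV)" for n
  define X where "X n i = (if 1 \<le> i \<and> i \<le> Suc n then g (i - 1) else - f n)" for n i
  interpret prob_space M unfolding M_def by (rule prob_space_measure_pmf)
  have setsF: "sets (F n) = {pi n -` A | A. True}" for n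
    unfolding F_def by (subst sets_vimage_algebra2) auto
  have spF: "space (F n) = UNIV" for n unfolding F_def by simp
  have sub: "subalgebra M (F n)" for n
    unfolding subalgebra_def M_def using spF by simp
  have pipi: "pi n (pi k i) = pi n i" if "n \<le> k" for n k i using that by (simp add: pi_def)
  have fil: "filtration_on M F"
    unfolding filtration_on_def
  proof (intro conjI allI impI sub)
    fix n k :: nat assume nk: "n \<le> k"
    show "sets (F n) \<subseteq> sets (F k)"
    proof
      fix A assume "A \<in> sets (F n)"
      then obtain B where A: "A = pi n -` B" using setsF by auto
      have "A = pi k -` (pi n -` B)" using pipi[OF nk] A by auto
      then show "A \<in> sets (F k)" using setsF by auto
    qed
  qed
  have sfs: "sigma_finite_subalgebra M (F n)" for n
    by (rule finite_measure_subalgebra_is_sigma_finite) (simp add: finite_measure_subalgebra_def finite_measure_subalgebra_axioms_def sub finite_measure_axioms)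
  have Xpi: "X n (pi n i) = X n i" for n i by (simp add: X_def pi_def)
  have measF: "X n \<in> borel_measurable (F n)" for n
  proof -
    have "pi n \<in> measurable (F n) (count_space UNIV)" unfolding F_def
      by (rule measurable_vimage_algebra1) auto
    moreover have "X n \<in> borel_measurable (count_space UNIV)" by simp
    ultimately have "(\<lambda>i. X n (pi n i)) \<in> borel_measurable (F n)" by (rule measurable_compose)
    then show ?thesis unfolding Xpi .
  qed
  have measM: "X n \<in> borel_measurable M" for n unfolding M_def by simp
  have intX: "integrable M (X n)" for n
  proof (rule integrable_const_bound[where B="\<bar>f n\<bar> + (\<Sum>k\<le>n. \<bar>g k\<bar>)"])
    show "AE x in M. norm (X n x) \<le> \<bar>f n\<bar> + (\<Sum>k\<le>n. \<bar>g k\<bar>)"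
    proof (rule AE_I2)
      fix x
      have "(\<Sum>k\<le>n. \<bar>g k\<bar>) \<ge> 0" by (simp add: sum_nonneg)
      moreover have "\<bar>g (x - 1)\<bar> \<le> (\<Sum>k\<le>n. \<bar>g k\<bar>)" if "x \<le> Suc n"
      proof -
        have "x - 1 \<in> {..n}" using that by auto
        then show ?thesis using member_le_sum[of "x - 1" "{..n}" "\<lambda>k. \<bar>g k\<bar>"] by auto
      qed
      ultimately show "norm (X n x) \<le> \<bar>f n\<bar> + (\<Sum>k\<le>n. \<bar>g k\<bar>)"
        unfolding X_def by (auto simp del: One_nat_def)
    qed
  qed (rule measM)
  define U where "U n = (\<Sum>a\<in>{1..Suc n}. w a)" for n
  define T where "T n = (\<Sum>a\<in>{1..Suc n}. g (a - 1) * w a)" for n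
  have U_eq: "U n = 1 - S n" for n
  proof (induction n)
    case 0 then show ?case by (simp add: U_def w_def S_def PP_0)
  next
    case (Suc n)
    have "U (Suc n) = U n + w (Suc (Suc n))" unfolding U_def by simp
    then show ?case using Suc by (simp add: w_def)
  qed
  have T_eq: "T n - f n * S n = m" for n
  proof (induction n)
    case 0
    have "(g 0 + f 0) * S0 = g 0 - m" using ss0 by (simp add: S0_def ss_def)
    then show ?case by (simp add: T_def w_def S_def PP_0 algebra_simps)
  next
    case (Suc n)
    have sp: "ss (Suc n) > 0" by (rule ss_pos)
    have "T (Suc n) = T n + g (Suc n) * (S n - S (Suc n))" unfolding T_def by (simp add: w_def)
    moreover have "S (Suc n) * ss (Suc n) = S n * (g (Suc n) + f n)"
      using sp by (simp add: S_Suc rr_def)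
    ultimately have "T (Suc n) - f (Suc n) * S (Suc n) = T n - f n * S n"
      by (simp add: ss_def algebra_simps)
    then show ?case using Suc by simp
  qed
  have EX: "(\<integral>x. X n x \<partial>M) = m" for n
  proof -
    have "(\<integral>x. X n x + f n \<partial>M) = (\<Sum>a\<in>{1..Suc n}. (X n a + f n) * pmf p a)"
      unfolding M_def by (rule integral_measure_pmf_real) (auto simp: X_def split: if_splits)
    also have "\<dots> = (\<Sum>a\<in>{1..Suc n}. g (a - 1) * w a + f n * w a)"
      by (rule sum.cong) (auto simp: X_def pw algebra_simps)
    also have "\<dots> = T n + f n * U n"
      unfolding T_def U_def by (simp only: sum.distrib sum_distrib_left)
    finally have "(\<integral>x. X n x \<partial>M) + f n = T n + f n * U n" using intX[of n] prob_space by simp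
    then show ?thesis using U_eq[of n] T_eq[of n] by (simp add: algebra_simps)
  qed
  have mart: "martingale M F X"
    unfolding martingale_def
  proof (intro conjI allI measF intX)
    fix n
    interpret sigma_finite_subalgebra M "F n" by (rule sfs)
    show "AE x in M. real_cond_exp M (F n) (X (Suc n)) x = X n x"
    proof (rule real_cond_exp_charact)
      fix A assume "A \<in> sets (F n)"
      then obtain B where A: "A = pi n -` B" using setsF by auto
      have AM: "A \<in> sets M" unfolding M_def by simp
      have i1: "integrable M (\<lambda>x. indicator A x * X k x)" for k
        using integrable_mult_indicator[OF AM intX[of k]] by simp
      have "(\<integral>x. indicator A x * X (Suc n) x - indicator A x * X n x \<partial>M) = 0"
      proof (cases "0 \<in> B")
        case True
        have "indicator A x * X (Suc n) x - indicator A x * X n x = X (Suc n) x - X n x" for x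
        proof (cases "x \<in> A")
          case False
          then have "1 \<le> x \<and> x \<le> Suc n" using True A by (auto simp: pi_def split: if_splits)
          then show ?thesis using False by (simp add: X_def)
        qed simp
        then show ?thesis using EX intX by simp
      next
        case False
        have "indicator A x * X (Suc n) x - indicator A x * X n x = 0" for x
        proof (cases "x \<in> A")
          case True
          then have "1 \<le> x \<and> x \<le> Suc n" using False A by (auto simp: pi_def split: if_splits)
          then show ?thesis using True by (simp add: X_def)
        qed simp
        then have "(\<lambda>x. indicator A x * X (Suc n) x - indicator A x * X n x) = (\<lambda>x. 0)"
          by (intro ext)
        then show ?thesis by (simp only:) simp
      qed
      then show "(\<integral>x\<in>A. X (Suc n) x \<partial>M) = (\<integral>x\<in>A. X n x \<partial>M)"
        unfolding set_lebesgue_integral_def using i1 by simp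
    qed (use intX measF in auto)
  qed
  have lbX: "\<forall>n. \<forall>x\<in>space M. X n x \<ge> - f n"
  proof (intro allI ballI)
    fix n x
    have "f 0 \<le> f n" "g 0 \<le> g (x - 1)" using mf mg by (auto simp: mono_def)
    then show "X n x \<ge> - f n" using fg0 by (simp add: X_def)
  qed
  have hit: "{x \<in> space M. \<exists>n. X n x \<ge> g n} = space M - {0}"
  proof -
    have "\<not> g n \<le> X n 0" for n using ss_pos[of n] by (simp add: X_def ss_def)
    moreover have "\<exists>n. g n \<le> X n x" if "x \<noteq> 0" for x
      using that by (intro exI[of _ "x - 1"]) (simp add: X_def)
    ultimately show ?thesis unfolding M_def by auto
  qed
  have "measure M {x \<in> space M. \<exists>n. X n x \<ge> g n} = 1 - w 0"
    unfolding hit using prob_compl[of "{0}"] unfolding M_def by (simp add: measure_pmf_single pw)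
  also have "\<dots> = crossing_bound f g m"
    by (simp add: w_def crossing_bound_def S0_def C_def ss_def)
  finally have "measure M {x \<in> space M. \<exists>n. X n x \<ge> g n} = crossing_bound f g m" .
  then show ?thesis using prob_space_axioms fil mart lbX EX[of 0] by blast
qed

end

theorem theorem2:
  fixes f g :: "nat \<Rightarrow> real"
  assumes "mono f" and "mono g" and "- f 0 < g 0"
  shows
    "(\<forall>(M :: 'a measure) F X.
        prob_space M \<and> filtration_on M F \<and> supermartingale M F X \<and>
        (\<forall>n. \<forall>x\<in>space M. X n x \<ge> - f n) \<and>
        integral\<^sup>L M (X 0) \<in> {- f 0 .. g 0}
      \<longrightarrow> measure M {x \<in> space M. \<exists>n. X n x \<ge> g n}
            \<le> crossing_bound f g (integral\<^sup>L M (X 0)))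
   \<and>
    (\<forall>m \<in> {- f 0 .. g 0}. \<exists>(M :: nat measure) F X.
        prob_space M \<and> filtration_on M F \<and> martingale M F X \<and>
        (\<forall>n. \<forall>x\<in>space M. X n x \<ge> - f n) \<and>
        integral\<^sup>L M (X 0) = m \<and>
        measure M {x \<in> space M. \<exists>n. X n x \<ge> g n} = crossing_bound f g m)"
  using part_a[OF assms] part_b[OF assms] by blast

end
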